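(* Let $(V,L,\varphi,E)$ be a valuation system. If $\varphi$ is $\Pi_{\aleph_1}$-extendible, then the hierarchy has collapsed at $\Pi_{\aleph_1}\varphi$.
   Context: $\aleph_1$ denotes the smallest uncountable ordinal. A valuation system $(V,L,\varphi,E)$ consists of: (i) a lattice $V$ which is $\sigma$-distributive (for every $a\in V$ and sequence $(b_n)$ with existing infimum, $\bigwedge_n(a\vee b_n)$ exists and equals $a\vee\bigwedge_n b_n$, and dually for suprema); (ii) a sublattice $L$ of $V$; (iii) a partially ordered abelian group $E$ which is R-complete (whenever $x_1\ge x_2\ge\cdots$ and $y_1\ge y_2\ge\cdots$ in $E$ are such that $\bigwedge_n(x_n+y_n)$ exists, $\bigwedge_n x_n$ and $\bigwedge_n y_n$ exist; dually for increasing sequences); (iv) a valuation $\varphi:L\to E$ (order-preserving, $\varphi(a\wedge b)+\varphi(a\vee b)=\varphi(a)+\varphi(b)$). A decreasing (resp. increasing) sequence $(a_n)$ in $L$ is $\varphi$-convergent if $\bigwedge_n a_n$ exists in $V$ and $\bigwedge_n\varphi(a_n)$ exists in $E$ (resp. with suprema). $\Pi L:=\{\bigwedge_n a_n:(a_n)\ \varphi\text{-convergent decreasing}\}$ and $\varphi$ is $\Pi$-extendible if there is a valuation $\Pi\varphi:\Pi L\to E$ with $\Pi\varphi(\bigwedge_n a_n)=\bigwedge_n\varphi(a_n)$ for all such sequences; $\Sigma L,\Sigma$-extendible, $\Sigma\varphi$ dually. Hierarchy (transfinite recursion): $\Pi_0\varphi=\Sigma_0\varphi=\varphi$ on $L$;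 $\varphi$ is $\Pi_{\alpha+1}$-extendible iff it is $\Sigma_\alpha$-extendible and $\Sigma_\alpha\varphi$ is $\Pi$-extendible, with $\Pi_{\alpha+1}L=\Pi(\Sigma_\alpha L)$, $\Pi_{\alpha+1}\varphi=\Pi(\Sigma_\alpha\varphi)$; $\varphi$ is $\Sigma_{\alpha+1}$-extendible iff it is $\Pi_\alpha$-extendible and $\Pi_\alpha\varphi$ is $\Sigma$-extendible, with $\Sigma_{\alpha+1}\varphi=\Sigma(\Pi_\alpha\varphi)$; at a limit $\lambda$, $\varphi$ is $\Pi_\lambda$-extendible iff $\Pi_\alpha$-extendible for all $\alpha<\lambda$, and then $\Pi_\lambda L=\bigcup_{\alpha<\lambda}\Pi_\alpha L$ with $\Pi_\lambda\varphi(c)=\Pi_\beta\varphi(c)$ for $c\in\Pi_\beta L$; similarly $\Sigma_\lambda$. The hierarchy has collapsed at $Q$, where $Q=\Pi_\alpha\varphi$ or $Q=\Sigma_\alpha\varphi$, if $\varphi$ is $\Pi_{\alpha+1}$- and $\Sigma_{\alpha+1}$-extendible and $\Pi(Q)=Q=\Sigma(Q)$ (i.e. $Q$ is $\Pi$- and $\Sigma$-extendible with $\Pi Q=Q=\Sigma Q$). *)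

theory Defs
  imports Main
begin

definition is_inf :: "'a::order set \<Rightarrow> 'a \<Rightarrow> bool" where
  "is_inf S x \<longleftrightarrow> (\<forall>y\<in>S. x \<le> y) \<and> (\<forall>z. (\<forall>y\<in>S. z \<le> y) \<longrightarrow> z \<le> x)"

definition is_sup :: "'a::order set \<Rightarrow> 'a \<Rightarrow> bool" where
  "is_sup S x \<longleftrightarrow> (\<forall>y\<in>S. y \<le> x) \<and> (\<forall>z. (\<forall>y\<in>S. y \<le> z) \<longrightarrow> x \<le> z)"

text \<open>The lattice V is the whole type 'v; sigma-distributivity of V.\<close>
definition sigma_distributive :: "'v::lattice itself \<Rightarrow> bool" where
  "sigma_distributive (T::'v itself) \<longleftrightarrow>
     (\<forall>(a::'v) (b::nat \<Rightarrow> 'v) (x::'v). is_inf (range b) x \<longrightarrow> is_inf (range (\<lambda>n. sup a (b n))) (sup a x)) \<and>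
     (\<forall>(a::'v) (b::nat \<Rightarrow> 'v) (x::'v). is_sup (range b) x \<longrightarrow> is_sup (range (\<lambda>n. inf a (b n))) (inf a x))"

definition R_complete :: "'e::ordered_ab_group_add itself \<Rightarrow> bool" where
  "R_complete (T::'e itself) \<longleftrightarrow>
     (\<forall>(x::nat \<Rightarrow> 'e) (y::nat \<Rightarrow> 'e). antimono x \<and> antimono y \<and> (\<exists>z. is_inf (range (\<lambda>n. x n + y n)) z)
         \<longrightarrow> (\<exists>u. is_inf (range x) u) \<and> (\<exists>u. is_inf (range y) u)) \<and>
     (\<forall>(x::nat \<Rightarrow> 'e) (y::nat \<Rightarrow> 'e). mono x \<and> mono y \<and> (\<exists>z. is_sup (range (\<lambda>n. x n + y n)) z)
         \<longrightarrow> (\<exists>u. is_sup (range x) u) \<and> (\<exists>u. is_sup (range y) u))"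

definition sublattice :: "'v::lattice set \<Rightarrow> bool" where
  "sublattice K \<longleftrightarrow> (\<forall>a\<in>K. \<forall>b\<in>K. inf a b \<in> K \<and> sup a b \<in> K)"

text \<open>A valuation on the (sub)lattice K (values outside K are irrelevant).\<close>
definition valuation :: "'v::lattice set \<Rightarrow> ('v \<Rightarrow> 'e::ordered_ab_group_add) \<Rightarrow> bool" where
  "valuation K f \<longleftrightarrow> sublattice K \<and>
     (\<forall>a\<in>K. \<forall>b\<in>K. a \<le> b \<longrightarrow> f a \<le> f b) \<and>
     (\<forall>a\<in>K. \<forall>b\<in>K. f (inf a b) + f (sup a b) = f a + f b)"

definition conv_dec :: "'v::lattice set \<Rightarrow> ('v \<Rightarrow> 'e::ordered_ab_group_add) \<Rightarrow> (nat \<Rightarrow> 'v) \<Rightarrow> bool" where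
  "conv_dec K f a \<longleftrightarrow> (\<forall>n. a n \<in> K) \<and> antimono a \<and>
     (\<exists>x. is_inf (range a) x) \<and> (\<exists>y. is_inf (range (\<lambda>n. f (a n))) y)"

definition conv_inc :: "'v::lattice set \<Rightarrow> ('v \<Rightarrow> 'e::ordered_ab_group_add) \<Rightarrow> (nat \<Rightarrow> 'v) \<Rightarrow> bool" where
  "conv_inc K f a \<longleftrightarrow> (\<forall>n. a n \<in> K) \<and> mono a \<and>
     (\<exists>x. is_sup (range a) x) \<and> (\<exists>y. is_sup (range (\<lambda>n. f (a n))) y)"

definition PiSet :: "'v::lattice set \<Rightarrow> ('v \<Rightarrow> 'e::ordered_ab_group_add) \<Rightarrow> 'v set" where
  "PiSet K f = {x. \<exists>a. conv_dec K f a \<and> is_inf (range a) x}"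

definition SigmaSet :: "'v::lattice set \<Rightarrow> ('v \<Rightarrow> 'e::ordered_ab_group_add) \<Rightarrow> 'v set" where
  "SigmaSet K f = {x. \<exists>a. conv_inc K f a \<and> is_sup (range a) x}"

definition Pi_extendible :: "'v::lattice set \<Rightarrow> ('v \<Rightarrow> 'e::ordered_ab_group_add) \<Rightarrow> bool" where
  "Pi_extendible K f \<longleftrightarrow> (\<exists>g. valuation (PiSet K f) g \<and>
     (\<forall>a x y. conv_dec K f a \<and> is_inf (range a) x \<and> is_inf (range (\<lambda>n. f (a n))) y \<longrightarrow> g x = y))"

definition Sigma_extendible :: "'v::lattice set \<Rightarrow> ('v \<Rightarrow> 'e::ordered_ab_group_add) \<Rightarrow> bool" where
  "Sigma_extendible K f \<longleftrightarrow> (\<exists>g. valuation (SigmaSet K f) g \<and>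
     (\<forall>a x y. conv_inc K f a \<and> is_sup (range a) x \<and> is_sup (range (\<lambda>n. f (a n))) y \<longrightarrow> g x = y))"

text \<open>The extended valuation (meaningful on PiSet K f when Pi_extendible K f holds).\<close>
definition PiVal :: "'v::lattice set \<Rightarrow> ('v \<Rightarrow> 'e::ordered_ab_group_add) \<Rightarrow> 'v \<Rightarrow> 'e" where
  "PiVal K f x = (THE y. \<exists>a. conv_dec K f a \<and> is_inf (range a) x \<and> is_inf (range (\<lambda>n. f (a n))) y)"

definition SigmaVal :: "'v::lattice set \<Rightarrow> ('v \<Rightarrow> 'e::ordered_ab_group_add) \<Rightarrow> 'v \<Rightarrow> 'e" where
  "SigmaVal K f x = (THE y. \<exists>a. conv_inc K f a \<and> is_sup (range a) x \<and> is_sup (range (\<lambda>n. f (a n))) y)"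

text \<open>A stage alpha records:
  (Pi_alpha-extendible, (Pi_alpha L, Pi_alpha phi), Sigma_alpha-extendible, (Sigma_alpha L, Sigma_alpha phi)).\<close>
type_synonym ('v, 'e) stage = "bool \<times> ('v set \<times> ('v \<Rightarrow> 'e)) \<times> bool \<times> ('v set \<times> ('v \<Rightarrow> 'e))"

definition pi_ext :: "('v, 'e) stage \<Rightarrow> bool" where "pi_ext s = fst s"
definition pi_set :: "('v, 'e) stage \<Rightarrow> 'v set" where "pi_set s = fst (fst (snd s))"
definition pi_val :: "('v, 'e) stage \<Rightarrow> 'v \<Rightarrow> 'e" where "pi_val s = snd (fst (snd s))"
definition sigma_ext :: "('v, 'e) stage \<Rightarrow> bool" where "sigma_ext s = fst (snd (snd s))"
definition sigma_set :: "('v, 'e) stage \<Rightarrow> 'v set" where "sigma_set s = fst (snd (snd (snd s)))"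
definition sigma_val :: "('v, 'e) stage \<Rightarrow> 'v \<Rightarrow> 'e" where "sigma_val s = snd (snd (snd (snd s)))"

definition succ_stage :: "('v::lattice, 'e::ordered_ab_group_add) stage \<Rightarrow> ('v, 'e) stage" where
  "succ_stage s =
     (sigma_ext s \<and> Pi_extendible (sigma_set s) (sigma_val s),
      (PiSet (sigma_set s) (sigma_val s), PiVal (sigma_set s) (sigma_val s)),
      pi_ext s \<and> Sigma_extendible (pi_set s) (pi_val s),
      (SigmaSet (pi_set s) (pi_val s), SigmaVal (pi_set s) (pi_val s)))"

definition limit_stage :: "'i set \<Rightarrow> ('i \<Rightarrow> ('v, 'e) stage) \<Rightarrow> ('v, 'e) stage" where
  "limit_stage S h =
     (\<forall>b\<in>S. pi_ext (h b),
      (\<Union>b\<in>S. pi_set (h b), \<lambda>c. pi_val (h (SOME b. b \<in> S \<and> c \<in> pi_set (h b))) c),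
      \<forall>b\<in>S. sigma_ext (h b),
      (\<Union>b\<in>S. sigma_set (h b), \<lambda>c. sigma_val (h (SOME b. b \<in> S \<and> c \<in> sigma_set (h b))) c))"

definition hier_F :: "'v::lattice set \<Rightarrow> ('v \<Rightarrow> 'e::ordered_ab_group_add) \<Rightarrow> 'i rel
     \<Rightarrow> ('i \<Rightarrow> ('v, 'e) stage) \<Rightarrow> 'i \<Rightarrow> ('v, 'e) stage" where
  "hier_F L phi W h a =
     (if (\<forall>b\<in>Field W. (a, b) \<in> W) then (True, (L, phi), True, (L, phi))
      else if (\<exists>b. (b, a) \<in> W - Id \<and> (\<forall>c. (c, a) \<in> W - Id \<longrightarrow> (c, b) \<in> W))
      then succ_stage (h (THE b. (b, a) \<in> W - Id \<and> (\<forall>c. (c, a) \<in> W - Id \<longrightarrow> (c, b) \<in> W)))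
      else limit_stage {b. (b, a) \<in> W - Id} h)"

definition hier :: "'v::lattice set \<Rightarrow> ('v \<Rightarrow> 'e::ordered_ab_group_add) \<Rightarrow> 'i rel \<Rightarrow> 'i \<Rightarrow> ('v, 'e) stage" where
  "hier L phi W = wfrec (W - Id) (hier_F L phi W)"

abbreviation omega1 :: "nat set rel" where "omega1 \<equiv> cardSuc natLeq"

text \<open>Stage aleph_1 (a limit): union over all countable ordinals.\<close>
definition hier_aleph1 :: "'v::lattice set \<Rightarrow> ('v \<Rightarrow> 'e::ordered_ab_group_add) \<Rightarrow> ('v, 'e) stage" where
  "hier_aleph1 L phi = limit_stage (Field omega1) (hier L phi omega1)"

definition collapsed_at_Pi :: "('v::lattice, 'e::ordered_ab_group_add) stage \<Rightarrow> bool" where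
  "collapsed_at_Pi s \<longleftrightarrow>
     pi_ext (succ_stage s) \<and> sigma_ext (succ_stage s) \<and>
     Pi_extendible (pi_set s) (pi_val s) \<and> Sigma_extendible (pi_set s) (pi_val s) \<and>
     PiSet (pi_set s) (pi_val s) = pi_set s \<and>
     (\<forall>x\<in>pi_set s. PiVal (pi_set s) (pi_val s) x = pi_val s x) \<and>
     SigmaSet (pi_set s) (pi_val s) = pi_set s \<and>
     (\<forall>x\<in>pi_set s. SigmaVal (pi_set s) (pi_val s) x = pi_val s x)"

end

theory Submission imports Defs begin
unbundle cardinal_syntax


definition subv :: "'v set \<Rightarrow> ('v \<Rightarrow> 'e) \<Rightarrow> 'v set \<Rightarrow> ('v \<Rightarrow> 'e) \<Rightarrow> bool" where
  "subv K f K' f' \<longleftrightarrow> K \<subseteq> K' \<and> (\<forall>x\<in>K. f x = f' x)"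

lemma subv_refl: "subv K f K f" by (simp add: subv_def)
lemma subv_trans: "subv K f K' f' \<Longrightarrow> subv K' f' K'' f'' \<Longrightarrow> subv K f K'' f''"
  by (auto simp: subv_def)

lemma valuation_cong: "valuation K f \<Longrightarrow> \<forall>x\<in>K. f x = g x \<Longrightarrow> valuation K g"
  unfolding valuation_def sublattice_def by (metis (no_types, lifting))

lemma valuation_union:
  assumes "\<And>x y. x \<in> K \<Longrightarrow> y \<in> K \<Longrightarrow> \<exists>K' f'. x \<in> K' \<and> y \<in> K' \<and> valuation K' f' \<and> subv K' f' K f"
  shows "valuation K f"
  unfolding valuation_def sublattice_def
proof (intro conjI ballI impI)
  fix x y assume x: "x \<in> K" and y: "y \<in> K"
  from assms[OF x y] obtain K' f' where k: "x \<in> K'" "y \<in> K'" "valuation K' f'" "subv K' f' K f" by blast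
  have cl: "inf x y \<in> K'" "sup x y \<in> K'" using k unfolding valuation_def sublattice_def by auto
  show "inf x y \<in> K" "sup x y \<in> K" using cl k(4) unfolding subv_def by auto
  have m: "f' (inf x y) + f' (sup x y) = f' x + f' y" using cl k unfolding valuation_def by blast
  have e: "\<forall>z\<in>K'. f' z = f z" using k(4) unfolding subv_def by blast
  show "f (inf x y) + f (sup x y) = f x + f y"
    using m e cl k(1,2) by metis
  assume "x \<le> y"
  then show "f x \<le> f y" using k unfolding subv_def valuation_def by auto
qed

lemma om_WO: "Well_order omega1"
  by (simp add: cardSuc_Well_order natLeq_Card_order)

lemma om_Card: "Card_order omega1"
  by (simp add: cardSuc_Card_order natLeq_Card_order)

lemma om_inf: "\<not> finite (Field omega1)"
  using cardSuc_finite[OF natLeq_Card_order] by (simp add: Field_natLeq)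

lemma om_nomax: "a \<in> Field omega1 \<Longrightarrow> \<exists>b. (a,b) \<in> omega1 - Id"
  using infinite_Card_order_limit[OF om_Card om_inf] by blast

lemma om_bound:
  fixes b :: "nat \<Rightarrow> nat set"
  assumes "\<And>n. b n \<in> Field omega1"
  shows "\<exists>i\<in>Field omega1. \<forall>n. (b n, i) \<in> omega1"
proof -
  let ?As = "\<lambda>i. {x. (x,i) \<in> omega1}"
  have ch: "relChain omega1 ?As"
    unfolding relChain_def using om_WO
    by (auto simp: wo_rel_def[symmetric] intro: wo_rel.TRANS[THEN transD])
  have sub: "range b \<subseteq> (\<Union>i \<in> Field omega1. ?As i)"
    using assms om_WO wo_rel.REFL[of omega1] by (auto simp: wo_rel_def refl_on_def)
  have "|range b| \<le>o |UNIV :: nat set|" using card_of_image[of b UNIV] by simp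
  moreover have "|UNIV :: nat set| =o natLeq" by (rule card_of_nat)
  ultimately have c: "|range b| \<le>o natLeq" using ordLeq_ordIso_trans by blast
  from cardSuc_UNION_Cinfinite[OF natLeq_Cinfinite ch sub c] show ?thesis by blast
qed
lemma is_inf_const: "is_inf (range (\<lambda>n::nat. c)) c"
  by (auto simp: is_inf_def)

lemma conv_dec_const: "c \<in> K \<Longrightarrow> conv_dec K f (\<lambda>n. c)"
  unfolding conv_dec_def using is_inf_const[of c] is_inf_const[of "f c"]
  by (auto simp: antimono_def)

lemma conv_dec_mono:
  assumes "subv K f K' f'" "conv_dec K f a"
  shows "conv_dec K' f' a \<and> (\<lambda>n. f (a n)) = (\<lambda>n. f' (a n))"
proof -
  have e: "(\<lambda>n. f (a n)) = (\<lambda>n. f' (a n))"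
    using assms unfolding subv_def conv_dec_def by auto
  show ?thesis using assms e unfolding subv_def conv_dec_def by auto
qed

lemma PiSet_sup: "K \<subseteq> PiSet K f"
  unfolding PiSet_def using conv_dec_const is_inf_const by blast

lemma PiVal_eq:
  assumes "Pi_extendible K f" "conv_dec K f a" "is_inf (range a) x" "is_inf (range (\<lambda>n. f (a n))) y"
  shows "PiVal K f x = y"
proof -
  from assms(1) obtain g where g: "\<forall>a x y. conv_dec K f a \<and> is_inf (range a) x \<and> is_inf (range (\<lambda>n. f (a n))) y \<longrightarrow> g x = y"
    unfolding Pi_extendible_def by blast
  show ?thesis unfolding PiVal_def
  proof (rule the_equality)
    show "\<exists>a. conv_dec K f a \<and> is_inf (range a) x \<and> is_inf (range (\<lambda>n. f (a n))) y" using assms by blast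
  next
    fix y' assume "\<exists>a. conv_dec K f a \<and> is_inf (range a) x \<and> is_inf (range (\<lambda>n. f (a n))) y'"
    then have "g x = y'" using g by blast
    moreover have "g x = y" using g assms by blast
    ultimately show "y' = y" by simp
  qed
qed

lemma Pi_valuation:
  assumes "Pi_extendible K f"
  shows "valuation (PiSet K f) (PiVal K f)"
proof -
  from assms obtain g where v: "valuation (PiSet K f) g" and
    g: "\<forall>a x y. conv_dec K f a \<and> is_inf (range a) x \<and> is_inf (range (\<lambda>n. f (a n))) y \<longrightarrow> g x = y"
    unfolding Pi_extendible_def by blast
  have "\<forall>x\<in>PiSet K f. g x = PiVal K f x"
  proof
    fix x assume "x \<in> PiSet K f"
    then obtain a where a: "conv_dec K f a" "is_inf (range a) x" unfolding PiSet_def by blast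
    then obtain y where y: "is_inf (range (\<lambda>n. f (a n))) y" unfolding conv_dec_def by blast
    show "g x = PiVal K f x" using PiVal_eq[OF assms a y] g a y by blast
  qed
  then show ?thesis using valuation_cong[OF v] by blast
qed

lemma Pi_sub:
  assumes "Pi_extendible K f"
  shows "subv K f (PiSet K f) (PiVal K f)"
  unfolding subv_def
proof (intro conjI ballI)
  show "K \<subseteq> PiSet K f" by (rule PiSet_sup)
  fix c assume "c \<in> K"
  then show "f c = PiVal K f c"
    using PiVal_eq[OF assms conv_dec_const[of c K f] is_inf_const is_inf_const] by simp
qed

lemma Pi_mono:
  assumes s: "subv K f K' f'" and e: "Pi_extendible K' f'"
  shows "subv (PiSet K f) (PiVal K f) (PiSet K' f') (PiVal K' f')"
  unfolding subv_def
proof (intro conjI ballI subsetI)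
  fix x assume "x \<in> PiSet K f"
  then obtain a where a: "conv_dec K f a" "is_inf (range a) x" unfolding PiSet_def by blast
  then obtain y where y: "is_inf (range (\<lambda>n. f (a n))) y" unfolding conv_dec_def by blast
  have a': "conv_dec K' f' a" and fe: "(\<lambda>n. f (a n)) = (\<lambda>n. f' (a n))"
    using conv_dec_mono[OF s a(1)] by auto
  show "x \<in> PiSet K' f'" using a' a(2) unfolding PiSet_def by blast
  have y': "is_inf (range (\<lambda>n. f' (a n))) y" using y unfolding fe .
  have v': "PiVal K' f' x = y" using PiVal_eq[OF e a' a(2) y'] .
  have "PiVal K f x = y" unfolding PiVal_def
  proof (rule the_equality)
    show "\<exists>a. conv_dec K f a \<and> is_inf (range a) x \<and> is_inf (range (\<lambda>n. f (a n))) y" using a y by blast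
  next
    fix y' assume "\<exists>a. conv_dec K f a \<and> is_inf (range a) x \<and> is_inf (range (\<lambda>n. f (a n))) y'"
    then obtain b where b: "conv_dec K f b" "is_inf (range b) x" "is_inf (range (\<lambda>n. f (b n))) y'" by blast
    have b1: "conv_dec K' f' b" and fb: "(\<lambda>n. f (b n)) = (\<lambda>n. f' (b n))" using conv_dec_mono[OF s b(1)] by auto
    have b3: "is_inf (range (\<lambda>n. f' (b n))) y'" using b(3) unfolding fb .
    have "PiVal K' f' x = y'" using PiVal_eq[OF e b1 b(2) b3] .
    then show "y' = y" using v' by simp
  qed
  then show "PiVal K f x = PiVal K' f' x" using v' by simp
qed

lemma Pi_cong:
  assumes e: "Pi_extendible K f" and fe: "\<forall>x\<in>K. f x = f' x"
  shows "Pi_extendible K f'"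
proof -
  have s1: "subv K f K f'" and s2: "subv K f' K f" using fe unfolding subv_def by auto
  have cd: "conv_dec K f a \<and> (\<lambda>n. f' (a n)) = (\<lambda>n. f (a n))" if "conv_dec K f' a" for a
    using conv_dec_mono[OF s2 that] by auto
  have PS: "PiSet K f' = PiSet K f"
    unfolding PiSet_def using cd conv_dec_mono[OF s1] by blast
  from e obtain g where v: "valuation (PiSet K f) g" and
    g: "\<forall>a x y. conv_dec K f a \<and> is_inf (range a) x \<and> is_inf (range (\<lambda>n. f (a n))) y \<longrightarrow> g x = y"
    unfolding Pi_extendible_def by blast
  show ?thesis unfolding Pi_extendible_def
  proof (intro exI conjI allI impI)
    show "valuation (PiSet K f') g" using v PS by simp
    fix a x y assume "conv_dec K f' a \<and> is_inf (range a) x \<and> is_inf (range (\<lambda>n. f' (a n))) y"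
    then show "g x = y" using cd g by metis
  qed
qed

lemma is_sup_const: "is_sup (range (\<lambda>n::nat. c)) c"
  by (auto simp: is_sup_def)

lemma conv_inc_const: "c \<in> K \<Longrightarrow> conv_inc K f (\<lambda>n. c)"
  unfolding conv_inc_def using is_sup_const[of c] is_sup_const[of "f c"]
  by (auto simp: mono_def)

lemma conv_inc_mono:
  assumes "subv K f K' f'" "conv_inc K f a"
  shows "conv_inc K' f' a \<and> (\<lambda>n. f (a n)) = (\<lambda>n. f' (a n))"
proof -
  have e: "(\<lambda>n. f (a n)) = (\<lambda>n. f' (a n))"
    using assms unfolding subv_def conv_inc_def by auto
  show ?thesis using assms e unfolding subv_def conv_inc_def by auto
qed

lemma SigmaSet_sup: "K \<subseteq> SigmaSet K f"
  unfolding SigmaSet_def using conv_inc_const is_sup_const by blast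

lemma SigmaVal_eq:
  assumes "Sigma_extendible K f" "conv_inc K f a" "is_sup (range a) x" "is_sup (range (\<lambda>n. f (a n))) y"
  shows "SigmaVal K f x = y"
proof -
  from assms(1) obtain g where g: "\<forall>a x y. conv_inc K f a \<and> is_sup (range a) x \<and> is_sup (range (\<lambda>n. f (a n))) y \<longrightarrow> g x = y"
    unfolding Sigma_extendible_def by blast
  show ?thesis unfolding SigmaVal_def
  proof (rule the_equality)
    show "\<exists>a. conv_inc K f a \<and> is_sup (range a) x \<and> is_sup (range (\<lambda>n. f (a n))) y" using assms by blast
  next
    fix y' assume "\<exists>a. conv_inc K f a \<and> is_sup (range a) x \<and> is_sup (range (\<lambda>n. f (a n))) y'"
    then have "g x = y'" using g by blast
    moreover have "g x = y" using g assms by blast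
    ultimately show "y' = y" by simp
  qed
qed

lemma Sigma_valuation:
  assumes "Sigma_extendible K f"
  shows "valuation (SigmaSet K f) (SigmaVal K f)"
proof -
  from assms obtain g where v: "valuation (SigmaSet K f) g" and
    g: "\<forall>a x y. conv_inc K f a \<and> is_sup (range a) x \<and> is_sup (range (\<lambda>n. f (a n))) y \<longrightarrow> g x = y"
    unfolding Sigma_extendible_def by blast
  have "\<forall>x\<in>SigmaSet K f. g x = SigmaVal K f x"
  proof
    fix x assume "x \<in> SigmaSet K f"
    then obtain a where a: "conv_inc K f a" "is_sup (range a) x" unfolding SigmaSet_def by blast
    then obtain y where y: "is_sup (range (\<lambda>n. f (a n))) y" unfolding conv_inc_def by blast
    show "g x = SigmaVal K f x" using SigmaVal_eq[OF assms a y] g a y by blast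
  qed
  then show ?thesis using valuation_cong[OF v] by blast
qed

lemma Sigma_sub:
  assumes "Sigma_extendible K f"
  shows "subv K f (SigmaSet K f) (SigmaVal K f)"
  unfolding subv_def
proof (intro conjI ballI)
  show "K \<subseteq> SigmaSet K f" by (rule SigmaSet_sup)
  fix c assume "c \<in> K"
  then show "f c = SigmaVal K f c"
    using SigmaVal_eq[OF assms conv_inc_const[of c K f] is_sup_const is_sup_const] by simp
qed

lemma Sigma_mono:
  assumes s: "subv K f K' f'" and e: "Sigma_extendible K' f'"
  shows "subv (SigmaSet K f) (SigmaVal K f) (SigmaSet K' f') (SigmaVal K' f')"
  unfolding subv_def
proof (intro conjI ballI subsetI)
  fix x assume "x \<in> SigmaSet K f"
  then obtain a where a: "conv_inc K f a" "is_sup (range a) x" unfolding SigmaSet_def by blast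
  then obtain y where y: "is_sup (range (\<lambda>n. f (a n))) y" unfolding conv_inc_def by blast
  have a': "conv_inc K' f' a" and fe: "(\<lambda>n. f (a n)) = (\<lambda>n. f' (a n))"
    using conv_inc_mono[OF s a(1)] by auto
  show "x \<in> SigmaSet K' f'" using a' a(2) unfolding SigmaSet_def by blast
  have y': "is_sup (range (\<lambda>n. f' (a n))) y" using y unfolding fe .
  have v': "SigmaVal K' f' x = y" using SigmaVal_eq[OF e a' a(2) y'] .
  have "SigmaVal K f x = y" unfolding SigmaVal_def
  proof (rule the_equality)
    show "\<exists>a. conv_inc K f a \<and> is_sup (range a) x \<and> is_sup (range (\<lambda>n. f (a n))) y" using a y by blast
  next
    fix y' assume "\<exists>a. conv_inc K f a \<and> is_sup (range a) x \<and> is_sup (range (\<lambda>n. f (a n))) y'"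
    then obtain b where b: "conv_inc K f b" "is_sup (range b) x" "is_sup (range (\<lambda>n. f (b n))) y'" by blast
    have b1: "conv_inc K' f' b" and fb: "(\<lambda>n. f (b n)) = (\<lambda>n. f' (b n))" using conv_inc_mono[OF s b(1)] by auto
    have b3: "is_sup (range (\<lambda>n. f' (b n))) y'" using b(3) unfolding fb .
    have "SigmaVal K' f' x = y'" using SigmaVal_eq[OF e b1 b(2) b3] .
    then show "y' = y" using v' by simp
  qed
  then show "SigmaVal K f x = SigmaVal K' f' x" using v' by simp
qed

lemma Sigma_cong:
  assumes e: "Sigma_extendible K f" and fe: "\<forall>x\<in>K. f x = f' x"
  shows "Sigma_extendible K f'"
proof -
  have s1: "subv K f K f'" and s2: "subv K f' K f" using fe unfolding subv_def by auto
  have cd: "conv_inc K f a \<and> (\<lambda>n. f' (a n)) = (\<lambda>n. f (a n))" if "conv_inc K f' a" for a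
    using conv_inc_mono[OF s2 that] by auto
  have PS: "SigmaSet K f' = SigmaSet K f"
    unfolding SigmaSet_def using cd conv_inc_mono[OF s1] by blast
  from e obtain g where v: "valuation (SigmaSet K f) g" and
    g: "\<forall>a x y. conv_inc K f a \<and> is_sup (range a) x \<and> is_sup (range (\<lambda>n. f (a n))) y \<longrightarrow> g x = y"
    unfolding Sigma_extendible_def by blast
  show ?thesis unfolding Sigma_extendible_def
  proof (intro exI conjI allI impI)
    show "valuation (SigmaSet K f') g" using v PS by simp
    fix a x y assume "conv_inc K f' a \<and> is_sup (range a) x \<and> is_sup (range (\<lambda>n. f' (a n))) y"
    then show "g x = y" using cd g by metis
  qed
qed

lemma conv_dec_transfer:
  assumes "conv_dec K f a" "\<forall>n. a n \<in> K'" "\<forall>n. f' (a n) = f (a n)"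
  shows "conv_dec K' f' a"
proof -
  have e: "(\<lambda>n. f' (a n)) = (\<lambda>n. f (a n))" using assms(3) by auto
  show ?thesis using assms(1,2) unfolding conv_dec_def e by blast
qed

lemma conv_inc_transfer:
  assumes "conv_inc K f a" "\<forall>n. a n \<in> K'" "\<forall>n. f' (a n) = f (a n)"
  shows "conv_inc K' f' a"
proof -
  have e: "(\<lambda>n. f' (a n)) = (\<lambda>n. f (a n))" using assms(3) by auto
  show ?thesis using assms(1,2) unfolding conv_inc_def e by blast
qed

lemma lim_pi_set: "pi_set (limit_stage S h) = (\<Union>b\<in>S. pi_set (h b))"
  by (simp add: limit_stage_def pi_set_def)
lemma lim_sigma_set: "sigma_set (limit_stage S h) = (\<Union>b\<in>S. sigma_set (h b))"
  by (simp add: limit_stage_def sigma_set_def)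
lemma lim_pi_ext: "pi_ext (limit_stage S h) = (\<forall>b\<in>S. pi_ext (h b))"
  by (simp add: limit_stage_def pi_ext_def)
lemma lim_sigma_ext: "sigma_ext (limit_stage S h) = (\<forall>b\<in>S. sigma_ext (h b))"
  by (simp add: limit_stage_def sigma_ext_def)

lemma lim_pi_val:
  assumes "x \<in> pi_set (limit_stage S h)"
  shows "\<exists>b\<in>S. x \<in> pi_set (h b) \<and> pi_val (limit_stage S h) x = pi_val (h b) x"
proof -
  have ex: "\<exists>b. b \<in> S \<and> x \<in> pi_set (h b)" using assms unfolding lim_pi_set by blast
  let ?b = "SOME b. b \<in> S \<and> x \<in> pi_set (h b)"
  have "?b \<in> S \<and> x \<in> pi_set (h ?b)" using someI_ex[OF ex] .
  moreover have "pi_val (limit_stage S h) x = pi_val (h ?b) x" by (simp add: limit_stage_def pi_val_def pi_set_def)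
  ultimately show ?thesis by blast
qed

lemma lim_sigma_val:
  assumes "x \<in> sigma_set (limit_stage S h)"
  shows "\<exists>b\<in>S. x \<in> sigma_set (h b) \<and> sigma_val (limit_stage S h) x = sigma_val (h b) x"
proof -
  have ex: "\<exists>b. b \<in> S \<and> x \<in> sigma_set (h b)" using assms unfolding lim_sigma_set by blast
  let ?b = "SOME b. b \<in> S \<and> x \<in> sigma_set (h b)"
  have "?b \<in> S \<and> x \<in> sigma_set (h ?b)" using someI_ex[OF ex] .
  moreover have "sigma_val (limit_stage S h) x = sigma_val (h ?b) x" by (simp add: limit_stage_def sigma_val_def sigma_set_def)
  ultimately show ?thesis by blast
qed

lemma succ_simps:
  "pi_ext (succ_stage s) = (sigma_ext s \<and> Pi_extendible (sigma_set s) (sigma_val s))"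
  "sigma_ext (succ_stage s) = (pi_ext s \<and> Sigma_extendible (pi_set s) (pi_val s))"
  "pi_set (succ_stage s) = PiSet (sigma_set s) (sigma_val s)"
  "pi_val (succ_stage s) = PiVal (sigma_set s) (sigma_val s)"
  "sigma_set (succ_stage s) = SigmaSet (pi_set s) (pi_val s)"
  "sigma_val (succ_stage s) = SigmaVal (pi_set s) (pi_val s)"
  by (simp_all add: succ_stage_def pi_ext_def sigma_ext_def pi_set_def pi_val_def sigma_set_def sigma_val_def)

lemma base_simps:
  "pi_set (True, (L, phi), True, (L, phi)) = L" "pi_val (True, (L, phi), True, (L, phi)) = phi"
  "sigma_set (True, (L, phi), True, (L, phi)) = L" "sigma_val (True, (L, phi), True, (L, phi)) = phi"
  by (simp_all add: pi_set_def pi_val_def sigma_set_def sigma_val_def)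

locale HS =
  fixes W :: "'i rel" and L :: "'v::lattice set" and phi :: "'v \<Rightarrow> 'e::ordered_ab_group_add"
  assumes WO: "Well_order W"
begin

abbreviation "H \<equiv> hier L phi W"
abbreviation "PS a \<equiv> pi_set (H a)"
abbreviation "PV a \<equiv> pi_val (H a)"
abbreviation "SS a \<equiv> sigma_set (H a)"
abbreviation "SV a \<equiv> sigma_val (H a)"

definition iszero where "iszero a \<longleftrightarrow> (\<forall>b\<in>Field W. (a,b) \<in> W)"
definition issucc where "issucc a b \<longleftrightarrow> (b,a) \<in> W - Id \<and> (\<forall>c. (c,a) \<in> W - Id \<longrightarrow> (c,b) \<in> W)"

lemma wfR: "wf (W - Id)" using WO wo_rel.WF unfolding wo_rel_def by blast
lemma antisymW: "(a,b) \<in> W \<Longrightarrow> (b,a) \<in> W \<Longrightarrow> a = b"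
  using WO wo_rel.ANTISYM unfolding wo_rel_def antisym_def by blast
lemma reflW: "a \<in> Field W \<Longrightarrow> (a,a) \<in> W"
  using WO wo_rel.REFL unfolding wo_rel_def by (blast dest: refl_onD)
lemma totalW: "a \<in> Field W \<Longrightarrow> b \<in> Field W \<Longrightarrow> (a,b) \<in> W \<or> (b,a) \<in> W"
  using WO wo_rel.TOTALS unfolding wo_rel_def by blast

lemma H_eq: "H a = hier_F L phi W (cut H (W - Id) a) a"
  unfolding hier_def by (rule wfrec[OF wfR])

lemma H_zero: assumes "iszero a" shows "H a = (True, (L, phi), True, (L, phi))"
  by (subst H_eq) (use assms in \<open>simp add: hier_F_def iszero_def\<close>)

lemma H_succ: assumes "issucc a b" shows "H a = succ_stage (H b)"
proof -
  have b: "(b,a) \<in> W - Id" "\<forall>c. (c,a) \<in> W - Id \<longrightarrow> (c,b) \<in> W" using assms by (auto simp: issucc_def)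
  have bF: "b \<in> Field W" using b(1) by (auto intro: FieldI1)
  have nz: "\<not> (\<forall>c\<in>Field W. (a,c) \<in> W)" using b(1) bF antisymW by blast
  have ex: "\<exists>b. (b, a) \<in> W - Id \<and> (\<forall>c. (c, a) \<in> W - Id \<longrightarrow> (c, b) \<in> W)" using b by blast
  have the: "(THE b'. (b', a) \<in> W - Id \<and> (\<forall>c. (c, a) \<in> W - Id \<longrightarrow> (c, b') \<in> W)) = b"
  proof (rule the_equality)
    show "(b, a) \<in> W - Id \<and> (\<forall>c. (c, a) \<in> W - Id \<longrightarrow> (c, b) \<in> W)" using b by blast
    fix b' assume "(b', a) \<in> W - Id \<and> (\<forall>c. (c, a) \<in> W - Id \<longrightarrow> (c, b') \<in> W)"
    then show "b' = b" using b antisymW by blast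
  qed
  show ?thesis
    apply (subst H_eq)
    unfolding hier_F_def
    by (simp only: if_not_P[OF nz] if_P[OF ex] the cut_apply[OF b(1)])
qed

lemma H_lim: assumes "\<not> iszero a" "\<forall>b. \<not> issucc a b"
  shows "H a = limit_stage {b. (b,a) \<in> W - Id} (cut H (W - Id) a)"
proof -
  have nz: "\<not> (\<forall>b\<in>Field W. (a,b) \<in> W)" using assms(1) unfolding iszero_def .
  have ns: "\<not> (\<exists>b. (b, a) \<in> W - Id \<and> (\<forall>c. (c, a) \<in> W - Id \<longrightarrow> (c, b) \<in> W))"
    using assms(2) unfolding issucc_def by blast
  show ?thesis
    apply (subst H_eq)
    unfolding hier_F_def by (simp only: if_not_P[OF nz] if_not_P[OF ns])
qed

lemma limH:
  assumes "H a = limit_stage {b. (b,a) \<in> W - Id} (cut H (W - Id) a)"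
  shows "\<And>b. (b,a) \<in> W - Id \<Longrightarrow> PS b \<subseteq> PS a"
    and "\<And>b. (b,a) \<in> W - Id \<Longrightarrow> SS b \<subseteq> SS a"
    and "\<And>x. x \<in> PS a \<Longrightarrow> \<exists>b. (b,a) \<in> W - Id \<and> x \<in> PS b \<and> PV a x = PV b x"
    and "\<And>x. x \<in> SS a \<Longrightarrow> \<exists>b. (b,a) \<in> W - Id \<and> x \<in> SS b \<and> SV a x = SV b x"
proof -
  fix b assume "(b,a) \<in> W - Id"
  then show "PS b \<subseteq> PS a" "SS b \<subseteq> SS a"
    unfolding assms lim_pi_set lim_sigma_set using cut_apply[of b a "W - Id" H] by auto
next
  fix x assume "x \<in> PS a"
  then obtain b where "b \<in> {b. (b,a) \<in> W - Id}" "x \<in> pi_set (cut H (W - Id) a b)" "PV a x = pi_val (cut H (W - Id) a b) x"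
    using lim_pi_val[of x] unfolding assms by blast
  then show "\<exists>b. (b,a) \<in> W - Id \<and> x \<in> PS b \<and> PV a x = PV b x" by (auto simp: cut_apply)
next
  fix x assume "x \<in> SS a"
  then obtain b where "b \<in> {b. (b,a) \<in> W - Id}" "x \<in> sigma_set (cut H (W - Id) a b)" "SV a x = sigma_val (cut H (W - Id) a b) x"
    using lim_sigma_val[of x] unfolding assms by blast
  then show "\<exists>b. (b,a) \<in> W - Id \<and> x \<in> SS b \<and> SV a x = SV b x" by (auto simp: cut_apply)
qed

lemma succ_exists:
  assumes "(g,a) \<in> W - Id" shows "\<exists>m. issucc m g \<and> (m,a) \<in> W"
proof -
  let ?A = "{m. (g,m) \<in> W - Id}"
  have aA: "a \<in> ?A" using assms by simp
  obtain m where m: "m \<in> ?A" and min: "\<And>c. (c,m) \<in> W - Id \<Longrightarrow> c \<notin> ?A"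
    using wfE_min[OF wfR aA] by blast
  have gF: "g \<in> Field W" and aF: "a \<in> Field W" using assms by (auto intro: FieldI1 FieldI2)
  have mF: "m \<in> Field W" using m by (auto intro: FieldI2)
  have ma: "(m,a) \<in> W"
  proof (cases "m = a")
    case True then show ?thesis using reflW aF by simp
  next
    case False
    then show ?thesis using totalW[OF mF aF] min[of a] aA by blast
  qed
  have "(c,g) \<in> W" if c: "(c,m) \<in> W - Id" for c
  proof (cases "c = g")
    case True then show ?thesis using reflW gF by simp
  next
    case False
    have cF: "c \<in> Field W" using c by (auto intro: FieldI1)
    show ?thesis using totalW[OF cF gF] min[OF c] False by blast
  qed
  then show ?thesis using m ma unfolding issucc_def by blast
qed

definition Inv where
  "Inv \<alpha> \<longleftrightarrow> valuation (PS \<alpha>) (PV \<alpha>) \<and> valuation (SS \<alpha>) (SV \<alpha>) \<and>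
     (\<forall>\<gamma>. (\<gamma>,\<alpha>) \<in> W \<longrightarrow> subv (PS \<gamma>) (PV \<gamma>) (PS \<alpha>) (PV \<alpha>) \<and> subv (SS \<gamma>) (SV \<gamma>) (SS \<alpha>) (SV \<alpha>)) \<and>
     (\<forall>\<gamma>. (\<gamma>,\<alpha>) \<in> W - Id \<longrightarrow> subv (PS \<gamma>) (PV \<gamma>) (SS \<alpha>) (SV \<alpha>) \<and> subv (SS \<gamma>) (SV \<gamma>) (PS \<alpha>) (PV \<alpha>))"

end
context HS
begin

lemma main:
  assumes val: "valuation L phi" and fl: "\<And>b. b \<in> Field W \<Longrightarrow> pi_ext (H b) \<and> sigma_ext (H b)"
  shows "\<alpha> \<in> Field W \<Longrightarrow> Inv \<alpha>"
proof (induction \<alpha> rule: wf_induct_rule[OF wfR])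
  case (1 \<alpha>)
  have IH: "Inv \<beta>" if "(\<beta>,\<alpha>) \<in> W - Id" for \<beta> using 1 that by (auto intro: FieldI1)
  have aF: "\<alpha> \<in> Field W" by fact
  consider (z) "iszero \<alpha>" | (s) \<delta> where "issucc \<alpha> \<delta>" | (l) "\<not> iszero \<alpha>" "\<forall>\<delta>. \<not> issucc \<alpha> \<delta>" by blast
  then show "Inv \<alpha>"
  proof cases
    case z
    have H: "H \<alpha> = (True,(L,phi),True,(L,phi))" using H_zero[OF z] .
    have le: "\<gamma> = \<alpha>" if "(\<gamma>,\<alpha>) \<in> W" for \<gamma>
      using z that aF antisymW FieldI1[OF that] unfolding iszero_def by blast
    show ?thesis unfolding Inv_def
    proof (intro conjI allI impI)
      show "valuation (PS \<alpha>) (PV \<alpha>)" "valuation (SS \<alpha>) (SV \<alpha>)" using val by (simp_all add: H base_simps)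
    next
      fix \<gamma> assume "(\<gamma>,\<alpha>) \<in> W"
      then have "\<gamma> = \<alpha>" by (rule le)
      then show "subv (PS \<gamma>) (PV \<gamma>) (PS \<alpha>) (PV \<alpha>)" "subv (SS \<gamma>) (SV \<gamma>) (SS \<alpha>) (SV \<alpha>)"
        by (simp_all add: subv_refl)
    next
      fix \<gamma> assume "(\<gamma>,\<alpha>) \<in> W - Id"
      then show "subv (PS \<gamma>) (PV \<gamma>) (SS \<alpha>) (SV \<alpha>)" "subv (SS \<gamma>) (SV \<gamma>) (PS \<alpha>) (PV \<alpha>)"
        using le by blast+
    qed
  next
    case (s \<delta>)
    have Hs: "H \<alpha> = succ_stage (H \<delta>)" by (rule H_succ[OF s])
    have dA: "(\<delta>,\<alpha>) \<in> W - Id" and dmax: "\<forall>c. (c,\<alpha>) \<in> W - Id \<longrightarrow> (c,\<delta>) \<in> W"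
      using s by (auto simp: issucc_def)
    have Id: "Inv \<delta>" by (rule IH[OF dA])
    have dF: "\<delta> \<in> Field W" using dA by (auto intro: FieldI1)
    have ePi: "Pi_extendible (SS \<delta>) (SV \<delta>)" and eSig: "Sigma_extendible (PS \<delta>) (PV \<delta>)"
      using fl[OF aF] by (auto simp: Hs succ_simps)
    have PSa: "PS \<alpha> = PiSet (SS \<delta>) (SV \<delta>)" "PV \<alpha> = PiVal (SS \<delta>) (SV \<delta>)"
        "SS \<alpha> = SigmaSet (PS \<delta>) (PV \<delta>)" "SV \<alpha> = SigmaVal (PS \<delta>) (PV \<delta>)"
      by (simp_all add: Hs succ_simps)
    have vP: "valuation (PS \<alpha>) (PV \<alpha>)" using Pi_valuation[OF ePi] PSa by simp
    have vS: "valuation (SS \<alpha>) (SV \<alpha>)" using Sigma_valuation[OF eSig] PSa by simp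
    have SP: "subv (SS \<delta>) (SV \<delta>) (PS \<alpha>) (PV \<alpha>)" using Pi_sub[OF ePi] PSa by simp
    have PS': "subv (PS \<delta>) (PV \<delta>) (SS \<alpha>) (SV \<alpha>)" using Sigma_sub[OF eSig] PSa by simp
    have step: "subv (PS \<delta>) (PV \<delta>) (PS \<alpha>) (PV \<alpha>) \<and> subv (SS \<delta>) (SV \<delta>) (SS \<alpha>) (SV \<alpha>)"
    proof -
      consider (z) "iszero \<delta>" | (s) \<epsilon> where "issucc \<delta> \<epsilon>" | (l) "\<not> iszero \<delta>" "\<forall>\<epsilon>. \<not> issucc \<delta> \<epsilon>" by blast
      then show ?thesis
      proof cases
        case z
        then have "H \<delta> = (True,(L,phi),True,(L,phi))" by (rule H_zero)
        then have "PS \<delta> = SS \<delta>" "PV \<delta> = SV \<delta>" by (simp_all add: base_simps)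
        then show ?thesis using SP PS' by simp
      next
        case (s \<epsilon>)
        have Hd: "H \<delta> = succ_stage (H \<epsilon>)" by (rule H_succ[OF s])
        have eA: "(\<epsilon>,\<delta>) \<in> W - Id" using s by (auto simp: issucc_def)
        have sub1: "subv (SS \<epsilon>) (SV \<epsilon>) (SS \<delta>) (SV \<delta>)" and sub2: "subv (PS \<epsilon>) (PV \<epsilon>) (PS \<delta>) (PV \<delta>)"
          using Id eA unfolding Inv_def by blast+
        have e: "PS \<delta> = PiSet (SS \<epsilon>) (SV \<epsilon>)" "PV \<delta> = PiVal (SS \<epsilon>) (SV \<epsilon>)"
          "SS \<delta> = SigmaSet (PS \<epsilon>) (PV \<epsilon>)" "SV \<delta> = SigmaVal (PS \<epsilon>) (PV \<epsilon>)"
          by (simp_all add: Hd succ_simps)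
        show ?thesis using Pi_mono[OF sub1 ePi] Sigma_mono[OF sub2 eSig] PSa e by simp
      next
        case l
        note LH = limH[OF H_lim[OF l]]
        have A: "x \<in> PS \<alpha> \<and> PV \<delta> x = PV \<alpha> x" if x: "x \<in> PS \<delta>" for x
        proof -
          obtain \<gamma> where g: "(\<gamma>,\<delta>) \<in> W - Id" "x \<in> PS \<gamma>" "PV \<delta> x = PV \<gamma> x" using LH(3)[OF x] by blast
          have "subv (PS \<gamma>) (PV \<gamma>) (SS \<delta>) (SV \<delta>)" using Id g(1) unfolding Inv_def by blast
          then have "subv (PS \<gamma>) (PV \<gamma>) (PS \<alpha>) (PV \<alpha>)" using SP subv_trans by blast
          then show ?thesis using g unfolding subv_def by auto
        qed
        have B: "x \<in> SS \<alpha> \<and> SV \<delta> x = SV \<alpha> x" if x: "x \<in> SS \<delta>" for x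
        proof -
          obtain \<gamma> where g: "(\<gamma>,\<delta>) \<in> W - Id" "x \<in> SS \<gamma>" "SV \<delta> x = SV \<gamma> x" using LH(4)[OF x] by blast
          have "subv (SS \<gamma>) (SV \<gamma>) (PS \<delta>) (PV \<delta>)" using Id g(1) unfolding Inv_def by blast
          then have "subv (SS \<gamma>) (SV \<gamma>) (SS \<alpha>) (SV \<alpha>)" using PS' subv_trans by blast
          then show ?thesis using g unfolding subv_def by auto
        qed
        show ?thesis using A B unfolding subv_def by auto
      qed
    qed
    show "Inv \<alpha>" unfolding Inv_def
    proof (intro conjI allI impI)
      show "valuation (PS \<alpha>) (PV \<alpha>)" by (rule vP)
      show "valuation (SS \<alpha>) (SV \<alpha>)" by (rule vS)
    next
      fix \<gamma> assume g: "(\<gamma>,\<alpha>) \<in> W"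
      show "subv (PS \<gamma>) (PV \<gamma>) (PS \<alpha>) (PV \<alpha>)"
      proof (cases "\<gamma> = \<alpha>")
        case True then show ?thesis by (simp add: subv_refl)
      next
        case False
        then have "(\<gamma>,\<delta>) \<in> W" using g dmax by blast
        show ?thesis
        proof (cases "\<gamma> = \<delta>")
          case True then show ?thesis using step by simp
        next
          case False
          then have "(\<gamma>,\<delta>) \<in> W - Id" using \<open>(\<gamma>,\<delta>) \<in> W\<close> by blast
          then have "subv (PS \<gamma>) (PV \<gamma>) (SS \<delta>) (SV \<delta>)" using Id unfolding Inv_def by blast
          then show ?thesis using SP subv_trans by blast
        qed
      qed
      show "subv (SS \<gamma>) (SV \<gamma>) (SS \<alpha>) (SV \<alpha>)"
      proof (cases "\<gamma> = \<alpha>")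
        case True then show ?thesis by (simp add: subv_refl)
      next
        case False
        then have "(\<gamma>,\<delta>) \<in> W" using g dmax by blast
        show ?thesis
        proof (cases "\<gamma> = \<delta>")
          case True then show ?thesis using step by simp
        next
          case False
          then have "(\<gamma>,\<delta>) \<in> W - Id" using \<open>(\<gamma>,\<delta>) \<in> W\<close> by blast
          then have "subv (SS \<gamma>) (SV \<gamma>) (PS \<delta>) (PV \<delta>)" using Id unfolding Inv_def by blast
          then show ?thesis using PS' subv_trans by blast
        qed
      qed
    next
      fix \<gamma> assume g: "(\<gamma>,\<alpha>) \<in> W - Id"
      then have "(\<gamma>,\<delta>) \<in> W" using dmax by blast
      then have "subv (PS \<gamma>) (PV \<gamma>) (PS \<delta>) (PV \<delta>)" "subv (SS \<gamma>) (SV \<gamma>) (SS \<delta>) (SV \<delta>)"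
        using Id unfolding Inv_def by blast+
      then show "subv (PS \<gamma>) (PV \<gamma>) (SS \<alpha>) (SV \<alpha>)" "subv (SS \<gamma>) (SV \<gamma>) (PS \<alpha>) (PV \<alpha>)"
        using PS' SP subv_trans by blast+
    qed
  next
    case l
    note LH = limH[OF H_lim[OF l]]
    have cmp: "(b,c) \<in> W \<or> (c,b) \<in> W" if "(b,\<alpha>) \<in> W - Id" "(c,\<alpha>) \<in> W - Id" for b c
      using totalW that by (auto intro: FieldI1)
    have subP: "subv (PS \<gamma>) (PV \<gamma>) (PS \<alpha>) (PV \<alpha>)" if g: "(\<gamma>,\<alpha>) \<in> W - Id" for \<gamma>
      unfolding subv_def
    proof (intro conjI ballI)
      show "PS \<gamma> \<subseteq> PS \<alpha>" using LH(1)[OF g] .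
      fix x assume x: "x \<in> PS \<gamma>"
      then have "x \<in> PS \<alpha>" using LH(1)[OF g] by blast
      then obtain b where b: "(b,\<alpha>) \<in> W - Id" "x \<in> PS b" "PV \<alpha> x = PV b x" using LH(3) by blast
      from cmp[OF g b(1)] show "PV \<gamma> x = PV \<alpha> x"
      proof
        assume "(\<gamma>,b) \<in> W"
        then have "subv (PS \<gamma>) (PV \<gamma>) (PS b) (PV b)" using IH[OF b(1)] unfolding Inv_def by blast
        then show ?thesis using x b unfolding subv_def by auto
      next
        assume "(b,\<gamma>) \<in> W"
        then have "subv (PS b) (PV b) (PS \<gamma>) (PV \<gamma>)" using IH[OF g] unfolding Inv_def by blast
        then show ?thesis using x b unfolding subv_def by auto
      qed
    qed
    have subS: "subv (SS \<gamma>) (SV \<gamma>) (SS \<alpha>) (SV \<alpha>)" if g: "(\<gamma>,\<alpha>) \<in> W - Id" for \<gamma>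
      unfolding subv_def
    proof (intro conjI ballI)
      show "SS \<gamma> \<subseteq> SS \<alpha>" using LH(2)[OF g] .
      fix x assume x: "x \<in> SS \<gamma>"
      then have "x \<in> SS \<alpha>" using LH(2)[OF g] by blast
      then obtain b where b: "(b,\<alpha>) \<in> W - Id" "x \<in> SS b" "SV \<alpha> x = SV b x" using LH(4) by blast
      from cmp[OF g b(1)] show "SV \<gamma> x = SV \<alpha> x"
      proof
        assume "(\<gamma>,b) \<in> W"
        then have "subv (SS \<gamma>) (SV \<gamma>) (SS b) (SV b)" using IH[OF b(1)] unfolding Inv_def by blast
        then show ?thesis using x b unfolding subv_def by auto
      next
        assume "(b,\<gamma>) \<in> W"
        then have "subv (SS b) (SV b) (SS \<gamma>) (SV \<gamma>)" using IH[OF g] unfolding Inv_def by blast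
        then show ?thesis using x b unfolding subv_def by auto
      qed
    qed
    have cross: "subv (PS \<gamma>) (PV \<gamma>) (SS \<alpha>) (SV \<alpha>) \<and> subv (SS \<gamma>) (SV \<gamma>) (PS \<alpha>) (PV \<alpha>)"
      if g: "(\<gamma>,\<alpha>) \<in> W - Id" for \<gamma>
    proof -
      obtain m where m: "issucc m \<gamma>" "(m,\<alpha>) \<in> W" using succ_exists[OF g] by blast
      have "m \<noteq> \<alpha>" using m(1) l(2) by blast
      then have mA: "(m,\<alpha>) \<in> W - Id" using m(2) by blast
      have gm: "(\<gamma>,m) \<in> W - Id" using m(1) unfolding issucc_def by blast
      have "subv (PS \<gamma>) (PV \<gamma>) (SS m) (SV m)" "subv (SS \<gamma>) (SV \<gamma>) (PS m) (PV m)"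
        using IH[OF mA] gm unfolding Inv_def by blast+
      then show ?thesis using subP[OF mA] subS[OF mA] subv_trans by blast
    qed
    have maxb: "\<exists>b. (b,\<alpha>) \<in> W - Id \<and> (b1,b) \<in> W \<and> (b2,b) \<in> W"
      if "(b1,\<alpha>) \<in> W - Id" "(b2,\<alpha>) \<in> W - Id" for b1 b2
    proof -
      have "b1 \<in> Field W" "b2 \<in> Field W" using that by (auto intro: FieldI1)
      then show ?thesis using cmp[OF that] that reflW by blast
    qed
    have vP: "valuation (PS \<alpha>) (PV \<alpha>)"
    proof (rule valuation_union)
      fix x y assume x: "x \<in> PS \<alpha>" and y: "y \<in> PS \<alpha>"
      obtain b1 where b1: "(b1,\<alpha>) \<in> W - Id" "x \<in> PS b1" using LH(3)[OF x] by blast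
      obtain b2 where b2: "(b2,\<alpha>) \<in> W - Id" "y \<in> PS b2" using LH(3)[OF y] by blast
      obtain b where b: "(b,\<alpha>) \<in> W - Id" "(b1,b) \<in> W" "(b2,b) \<in> W" using maxb[OF b1(1) b2(1)] by blast
      have "subv (PS b1) (PV b1) (PS b) (PV b)" "subv (PS b2) (PV b2) (PS b) (PV b)" "valuation (PS b) (PV b)"
        using IH[OF b(1)] b unfolding Inv_def by blast+
      then show "\<exists>K' f'. x \<in> K' \<and> y \<in> K' \<and> valuation K' f' \<and> subv K' f' (PS \<alpha>) (PV \<alpha>)"
        using b1 b2 subP[OF b(1)] unfolding subv_def by blast
    qed
    have vS: "valuation (SS \<alpha>) (SV \<alpha>)"
    proof (rule valuation_union)
      fix x y assume x: "x \<in> SS \<alpha>" and y: "y \<in> SS \<alpha>"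
      obtain b1 where b1: "(b1,\<alpha>) \<in> W - Id" "x \<in> SS b1" using LH(4)[OF x] by blast
      obtain b2 where b2: "(b2,\<alpha>) \<in> W - Id" "y \<in> SS b2" using LH(4)[OF y] by blast
      obtain b where b: "(b,\<alpha>) \<in> W - Id" "(b1,b) \<in> W" "(b2,b) \<in> W" using maxb[OF b1(1) b2(1)] by blast
      have "subv (SS b1) (SV b1) (SS b) (SV b)" "subv (SS b2) (SV b2) (SS b) (SV b)" "valuation (SS b) (SV b)"
        using IH[OF b(1)] b unfolding Inv_def by blast+
      then show "\<exists>K' f'. x \<in> K' \<and> y \<in> K' \<and> valuation K' f' \<and> subv K' f' (SS \<alpha>) (SV \<alpha>)"
        using b1 b2 subS[OF b(1)] unfolding subv_def by blast
    qed
    show "Inv \<alpha>" unfolding Inv_def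
    proof (intro conjI allI impI)
      fix \<gamma> assume "(\<gamma>,\<alpha>) \<in> W"
      then show "subv (PS \<gamma>) (PV \<gamma>) (PS \<alpha>) (PV \<alpha>)" "subv (SS \<gamma>) (SV \<gamma>) (SS \<alpha>) (SV \<alpha>)"
        using subP subS subv_refl by (cases "\<gamma> = \<alpha>"; auto)+
    qed (use vP vS cross in auto)
  qed
qed

end
context HS
begin

lemma final:
  assumes val: "valuation L phi" and pe: "\<forall>b\<in>Field W. pi_ext (H b)"
    and nomax: "\<And>a. a \<in> Field W \<Longrightarrow> \<exists>b. (a,b) \<in> W - Id"
    and bound: "\<And>bs::nat \<Rightarrow> 'i. (\<And>n. bs n \<in> Field W) \<Longrightarrow> \<exists>i\<in>Field W. \<forall>n. (bs n, i) \<in> W"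
  shows "collapsed_at_Pi (limit_stage (Field W) H)"
proof -
  have sucx: "\<exists>m. issucc m a \<and> m \<in> Field W \<and> H m = succ_stage (H a) \<and> (a,m) \<in> W - Id" if aF: "a \<in> Field W" for a
  proof -
    obtain b where "(a,b) \<in> W - Id" using nomax[OF aF] by blast
    then obtain m where m: "issucc m a" using succ_exists by blast
    then have "(a,m) \<in> W - Id" unfolding issucc_def by blast
    then show ?thesis using m H_succ[OF m] by (auto intro: FieldI2)
  qed
  have fl: "pi_ext (H b) \<and> sigma_ext (H b) \<and> Pi_extendible (SS b) (SV b) \<and> Sigma_extendible (PS b) (PV b)"
    if bF: "b \<in> Field W" for b
  proof -
    obtain m where m: "m \<in> Field W" "H m = succ_stage (H b)" using sucx[OF bF] by blast
    have "pi_ext (H m)" using pe m(1) by blast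
    moreover have "sigma_ext (H m)"
    proof -
      obtain m2 where m2: "m2 \<in> Field W" "H m2 = succ_stage (H m)" using sucx[OF m(1)] by blast
      show ?thesis using pe m2 by (auto simp: succ_simps)
    qed
    ultimately show ?thesis using m(2) by (auto simp: succ_simps)
  qed
  have Inv: "Inv b" if bF: "b \<in> Field W" for b
  proof (rule main[OF val _ bF])
    fix c assume "c \<in> Field W" then show "pi_ext (H c) \<and> sigma_ext (H c)" using fl by blast
  qed
  define s where "s = limit_stage (Field W) H"
  define P where "P = pi_set s"
  define f where "f = pi_val s"
  define S where "S = sigma_set s"
  define g where "g = sigma_val s"
  have Ps: "\<exists>b\<in>Field W. x \<in> PS b \<and> f x = PV b x" if "x \<in> P" for x
    using lim_pi_val[of x "Field W" H] that unfolding P_def f_def s_def by blast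
  have Ss: "\<exists>b\<in>Field W. x \<in> SS b \<and> g x = SV b x" if "x \<in> S" for x
    using lim_sigma_val[of x "Field W" H] that unfolding S_def g_def s_def by blast
  have PU: "PS b \<subseteq> P" if "b \<in> Field W" for b using that unfolding P_def s_def lim_pi_set by blast
  have SU: "SS b \<subseteq> S" if "b \<in> Field W" for b using that unfolding S_def s_def lim_sigma_set by blast
  have Psub: "subv (PS c) (PV c) P f" if c: "c \<in> Field W" for c
    unfolding subv_def
  proof (intro conjI ballI)
    show "PS c \<subseteq> P" using PU[OF c] .
    fix x assume x: "x \<in> PS c"
    then obtain b where b: "b \<in> Field W" "x \<in> PS b" "f x = PV b x" using Ps PU[OF c] by blast
    from totalW[OF c b(1)] show "PV c x = f x"
    proof
      assume "(c,b) \<in> W"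
      then have "subv (PS c) (PV c) (PS b) (PV b)" using Inv[OF b(1)] unfolding Inv_def by blast
      then show ?thesis using x b unfolding subv_def by auto
    next
      assume "(b,c) \<in> W"
      then have "subv (PS b) (PV b) (PS c) (PV c)" using Inv[OF c] unfolding Inv_def by blast
      then show ?thesis using x b unfolding subv_def by auto
    qed
  qed
  have Ssub: "subv (SS c) (SV c) S g" if c: "c \<in> Field W" for c
    unfolding subv_def
  proof (intro conjI ballI)
    show "SS c \<subseteq> S" using SU[OF c] .
    fix x assume x: "x \<in> SS c"
    then obtain b where b: "b \<in> Field W" "x \<in> SS b" "g x = SV b x" using Ss SU[OF c] by blast
    from totalW[OF c b(1)] show "SV c x = g x"
    proof
      assume "(c,b) \<in> W"
      then have "subv (SS c) (SV c) (SS b) (SV b)" using Inv[OF b(1)] unfolding Inv_def by blast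
      then show ?thesis using x b unfolding subv_def by auto
    next
      assume "(b,c) \<in> W"
      then have "subv (SS b) (SV b) (SS c) (SV c)" using Inv[OF c] unfolding Inv_def by blast
      then show ?thesis using x b unfolding subv_def by auto
    qed
  qed
  have PSs: "subv P f S g"
    unfolding subv_def
  proof (intro conjI ballI subsetI)
    fix x assume "x \<in> P"
    then obtain b where b: "b \<in> Field W" "x \<in> PS b" "f x = PV b x" using Ps by blast
    obtain m where m: "m \<in> Field W" "(b,m) \<in> W - Id" using sucx[OF b(1)] by blast
    have "subv (PS b) (PV b) (SS m) (SV m)" using Inv[OF m(1)] m(2) unfolding Inv_def by blast
    then have "subv (PS b) (PV b) S g" using Ssub[OF m(1)] subv_trans by blast
    then show "x \<in> S" "f x = g x" using b unfolding subv_def by auto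
  qed
  have SPs: "subv S g P f"
    unfolding subv_def
  proof (intro conjI ballI subsetI)
    fix x assume "x \<in> S"
    then obtain b where b: "b \<in> Field W" "x \<in> SS b" "g x = SV b x" using Ss by blast
    obtain m where m: "m \<in> Field W" "(b,m) \<in> W - Id" using sucx[OF b(1)] by blast
    have "subv (SS b) (SV b) (PS m) (PV m)" using Inv[OF m(1)] m(2) unfolding Inv_def by blast
    then have "subv (SS b) (SV b) P f" using Psub[OF m(1)] subv_trans by blast
    then show "x \<in> P" "g x = f x" using b unfolding subv_def by auto
  qed
  have SeqP: "S = P" using PSs SPs unfolding subv_def by blast
  have valP: "valuation P f"
  proof (rule valuation_union)
    fix x y assume x: "x \<in> P" and y: "y \<in> P"
    obtain b1 where b1: "b1 \<in> Field W" "x \<in> PS b1" using Ps[OF x] by blast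
    obtain b2 where b2: "b2 \<in> Field W" "y \<in> PS b2" using Ps[OF y] by blast
    obtain b where b: "b \<in> Field W" "(b1,b) \<in> W" "(b2,b) \<in> W"
    proof (cases "(b1,b2) \<in> W")
      case True then show ?thesis using that[of b2] b2(1) reflW[OF b2(1)] by blast
    next
      case False then have "(b2,b1) \<in> W" using totalW[OF b1(1) b2(1)] by blast
      then show ?thesis using that[of b1] b1(1) reflW[OF b1(1)] by blast
    qed
    have "subv (PS b1) (PV b1) (PS b) (PV b)" "subv (PS b2) (PV b2) (PS b) (PV b)" "valuation (PS b) (PV b)"
      using Inv[OF b(1)] b unfolding Inv_def by blast+
    then show "\<exists>K' f'. x \<in> K' \<and> y \<in> K' \<and> valuation K' f' \<and> subv K' f' P f"
      using b1 b2 Psub[OF b(1)] unfolding subv_def by blast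
  qed
  have bnd: "\<exists>\<beta>\<in>Field W. \<forall>n. a n \<in> PS \<beta> \<and> PV \<beta> (a n) = f (a n)" if a: "\<forall>n. a n \<in> P" for a :: "nat \<Rightarrow> 'v"
  proof -
    have "\<forall>n. \<exists>b. b \<in> Field W \<and> a n \<in> PS b" using Ps a by blast
    then obtain bs where bs: "\<And>n. bs n \<in> Field W" "\<And>n. a n \<in> PS (bs n)" by metis
    obtain \<beta> where \<beta>: "\<beta> \<in> Field W" "\<forall>n. (bs n, \<beta>) \<in> W" using bound[of bs] bs(1) by blast
    have "subv (PS (bs n)) (PV (bs n)) (PS \<beta>) (PV \<beta>)" for n
      using Inv[OF \<beta>(1)] \<beta>(2) unfolding Inv_def by blast
    then have "a n \<in> PS \<beta>" for n using bs(2)[of n] unfolding subv_def by blast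
    moreover have "PV \<beta> (a n) = f (a n)" if "a n \<in> PS \<beta>" for n using Psub[OF \<beta>(1)] that unfolding subv_def by blast
    ultimately show ?thesis using \<beta>(1) by blast
  qed
  have key_dec: "x \<in> P \<and> f x = y"
    if a: "conv_dec P f a" "is_inf (range a) x" "is_inf (range (\<lambda>n. f (a n))) y" for a x y
  proof -
    have aP: "\<forall>n. a n \<in> P" using a(1) unfolding conv_dec_def by blast
    obtain \<beta> where \<beta>: "\<beta> \<in> Field W" "\<forall>n. a n \<in> PS \<beta> \<and> PV \<beta> (a n) = f (a n)" using bnd[OF aP] by blast
    obtain m1 where m1: "m1 \<in> Field W" "(\<beta>,m1) \<in> W - Id" "H m1 = succ_stage (H \<beta>)" using sucx[OF \<beta>(1)] by blast
    obtain m2 where m2: "m2 \<in> Field W" "H m2 = succ_stage (H m1)" using sucx[OF m1(1)] by blast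
    have sb: "subv (PS \<beta>) (PV \<beta>) (SS m1) (SV m1)" using Inv[OF m1(1)] m1(2) unfolding Inv_def by blast
    have am: "\<forall>n. a n \<in> SS m1" "\<forall>n. SV m1 (a n) = f (a n)" using sb \<beta>(2) unfolding subv_def by (auto, metis)
    have cd: "conv_dec (SS m1) (SV m1) a" using conv_dec_transfer[OF a(1) am] .
    have fe: "(\<lambda>n. SV m1 (a n)) = (\<lambda>n. f (a n))" using am(2) by auto
    have y': "is_inf (range (\<lambda>n. SV m1 (a n))) y" unfolding fe by (rule a(3))
    have xin: "x \<in> PiSet (SS m1) (SV m1)" using cd a(2) unfolding PiSet_def by blast
    have "PiVal (SS m1) (SV m1) x = y" using PiVal_eq[OF _ cd a(2) y'] fl[OF m1(1)] by blast
    then have "x \<in> PS m2" "PV m2 x = y" using xin m2(2) by (simp_all add: succ_simps)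
    then show ?thesis using Psub[OF m2(1)] unfolding subv_def by auto
  qed
  have key_inc: "x \<in> P \<and> f x = y"
    if a: "conv_inc P f a" "is_sup (range a) x" "is_sup (range (\<lambda>n. f (a n))) y" for a x y
  proof -
    have aP: "\<forall>n. a n \<in> P" using a(1) unfolding conv_inc_def by blast
    obtain \<beta> where \<beta>: "\<beta> \<in> Field W" "\<forall>n. a n \<in> PS \<beta> \<and> PV \<beta> (a n) = f (a n)" using bnd[OF aP] by blast
    obtain m1 where m1: "m1 \<in> Field W" "(\<beta>,m1) \<in> W - Id" "H m1 = succ_stage (H \<beta>)" using sucx[OF \<beta>(1)] by blast
    have am: "\<forall>n. a n \<in> PS \<beta>" "\<forall>n. PV \<beta> (a n) = f (a n)" using \<beta>(2) by auto
    have cd: "conv_inc (PS \<beta>) (PV \<beta>) a" using conv_inc_transfer[OF a(1) am] .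
    have fe: "(\<lambda>n. PV \<beta> (a n)) = (\<lambda>n. f (a n))" using am(2) by auto
    have y': "is_sup (range (\<lambda>n. PV \<beta> (a n))) y" unfolding fe by (rule a(3))
    have xin: "x \<in> SigmaSet (PS \<beta>) (PV \<beta>)" using cd a(2) unfolding SigmaSet_def by blast
    have "SigmaVal (PS \<beta>) (PV \<beta>) x = y" using SigmaVal_eq[OF _ cd a(2) y'] fl[OF \<beta>(1)] by blast
    then have "x \<in> SS m1" "SV m1 x = y" using xin m1(3) by (simp_all add: succ_simps)
    then have "x \<in> S" "g x = y" using Ssub[OF m1(1)] unfolding subv_def by auto
    then show ?thesis using SPs unfolding subv_def by auto
  qed
  have PiSetP: "PiSet P f = P"
  proof
    show "PiSet P f \<subseteq> P"
    proof
      fix x assume "x \<in> PiSet P f"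
      then obtain a where a: "conv_dec P f a" "is_inf (range a) x" unfolding PiSet_def by blast
      then obtain y where "is_inf (range (\<lambda>n. f (a n))) y" unfolding conv_dec_def by blast
      then show "x \<in> P" using key_dec a by blast
    qed
  qed (rule PiSet_sup)
  have SigmaSetP: "SigmaSet P f = P"
  proof
    show "SigmaSet P f \<subseteq> P"
    proof
      fix x assume "x \<in> SigmaSet P f"
      then obtain a where a: "conv_inc P f a" "is_sup (range a) x" unfolding SigmaSet_def by blast
      then obtain y where "is_sup (range (\<lambda>n. f (a n))) y" unfolding conv_inc_def by blast
      then show "x \<in> P" using key_inc a by blast
    qed
  qed (rule SigmaSet_sup)
  have PiE: "Pi_extendible P f"
    unfolding Pi_extendible_def using valP PiSetP key_dec by (intro exI[of _ f]) auto
  have SigE: "Sigma_extendible P f"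
    unfolding Sigma_extendible_def using valP SigmaSetP key_inc by (intro exI[of _ f]) auto
  have "\<forall>x\<in>P. f x = g x" using PSs unfolding subv_def by blast
  then have "Pi_extendible P g" by (rule Pi_cong[OF PiE])
  then have PiES: "Pi_extendible S g" using SeqP by simp
  have pes: "pi_ext s" and ses: "sigma_ext s"
    unfolding s_def lim_pi_ext lim_sigma_ext using fl by auto
  have PV: "\<forall>x\<in>P. PiVal P f x = f x" using Pi_sub[OF PiE] unfolding subv_def by auto
  have SV: "\<forall>x\<in>P. SigmaVal P f x = f x" using Sigma_sub[OF SigE] unfolding subv_def by auto
  have "collapsed_at_Pi s"
    unfolding collapsed_at_Pi_def succ_simps
    apply (fold P_def f_def S_def g_def)
    using pes ses PiES PiE SigE PiSetP SigmaSetP PV SV by blast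
  then show ?thesis unfolding s_def .
qed

end

theorem lemma5p32:
  fixes L :: "'v::lattice set" and phi :: "'v \<Rightarrow> 'e::ordered_ab_group_add"
  assumes "sigma_distributive TYPE('v)"
    and "sublattice L"
    and "R_complete TYPE('e)"
    and "valuation L phi"
    and "pi_ext (hier_aleph1 L phi)"
  shows "collapsed_at_Pi (hier_aleph1 L phi)"
proof -
  interpret HS omega1 L phi by unfold_locales (rule om_WO)
  have pe: "\<forall>b\<in>Field omega1. pi_ext (hier L phi omega1 b)"
    using assms(5) unfolding hier_aleph1_def lim_pi_ext .
  show ?thesis unfolding hier_aleph1_def
    by (rule final[OF assms(4) pe om_nomax om_bound])
qed
end
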